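(* Let $n\in\mathbb N$, let $f(z)=\sum_{j\ge0}a_jz^j$ be extremal for $M_n$ with $a_0>0$, and let $P(z)=a_n+2\sum_{j=1}^na_{n-j}z^j$. Then every zero of $P$ lies in the annulus $\{z: 1\le|z|\le r\}$, where \[r=\frac1{a_0}\sqrt{\sum_{j=0}^{n-1}|a_j|^2+\frac{a_n^2}{4}}.\]
   Context: $\mathbb D$ is the open unit disc; $\mathcal B_0=\{f$ holomorphic on $\mathbb D: 0<|f|\le1\}$; $M_n(f)=\mathrm{Re}\,a_n$; $f\in\mathcal B_0$ is extremal for $M_n$ if $M_n(f)\ge M_n(F)$ for all $F\in\mathcal B_0$ (for such $f$, $a_n>0$). *)

theory Defs
  imports "HOL-Analysis.Analysis"
begin

definition B0 :: "(complex \<Rightarrow> complex) set" where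
  "B0 = {f. f holomorphic_on ball 0 1 \<and> (\<forall>z\<in>ball 0 1. 0 < cmod (f z) \<and> cmod (f z) \<le> 1)}"

definition coef :: "(complex \<Rightarrow> complex) \<Rightarrow> nat \<Rightarrow> complex" where
  "coef f j = (deriv ^^ j) f 0 / of_nat (fact j)"

definition M :: "nat \<Rightarrow> (complex \<Rightarrow> complex) \<Rightarrow> real" where
  "M n f = Re (coef f n)"

definition extremal :: "nat \<Rightarrow> (complex \<Rightarrow> complex) \<Rightarrow> bool" where
  "extremal n f \<longleftrightarrow> f \<in> B0 \<and> (\<forall>F\<in>B0. M n f \<ge> M n F)"

end

theory Submission
  imports Defs "HOL-Complex_Analysis.Complex_Analysis"
begin


lemma coef_eq: "g has_fps_expansion G \<Longrightarrow> coef g n = G $ n"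
  by (simp add: coef_def fps_nth_fps_expansion)

lemma var:
  assumes ext: "extremal n f" and hv: "v holomorphic_on ball 0 1" and ev: "v has_fps_expansion V"
   and d: "\<delta> > 0" and bd: "\<And>z. z \<in> ball 0 1 \<Longrightarrow> \<delta> \<le> Re (v z) \<and> cmod (v z) \<le> B"
  shows "0 \<le> Re ((fps_expansion f 0 * V) $ n)"
proof -
  have fB: "f \<in> B0" and mx: "\<And>F. F \<in> B0 \<Longrightarrow> M n F \<le> M n f" using ext by (auto simp: extremal_def)
  have hf: "f holomorphic_on ball 0 1" and fz: "\<And>z. z \<in> ball 0 1 \<Longrightarrow> 0 < cmod (f z) \<and> cmod (f z) \<le> 1"
    using fB by (auto simp: B0_def)
  have dB: "\<delta> \<le> B" using bd[of 0] complex_Re_le_cmod[of "v 0"] by auto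
  define s where "s = \<delta> / (2 * B^2)"
  have Bp: "B > 0" using d dB by linarith
  have sp: "s > 0" using d Bp by (simp add: s_def)
  have sB: "s * B^2 = \<delta>/2" using Bp by (simp add: s_def)
  have sB1: "s * B \<le> 1/2"
  proof -
    have "s * B = \<delta> / (2*B)" using Bp by (simp add: s_def power2_eq_square)
    also have "\<dots> \<le> 1/2" using dB Bp by (simp add: field_simps)
    finally show ?thesis .
  qed
  define F where "F = (\<lambda>z. f z * (1 - of_real s * v z))"
  have FB: "F \<in> B0"
    unfolding B0_def mem_Collect_eq
  proof (intro conjI ballI)
    show "F holomorphic_on ball 0 1" unfolding F_def using hf hv by (intro holomorphic_intros)
  next
    fix z :: complex assume z: "z \<in> ball 0 1"
    from bd[OF z] have b1: "\<delta> \<le> Re (v z)" and b2: "cmod (v z) \<le> B" by auto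
    have re: "Re (1 - of_real s * v z) = 1 - s * Re (v z)" by simp
    have im: "Im (1 - of_real s * v z) = - s * Im (v z)" by simp
    have "Re (v z) \<le> B" using b2 complex_Re_le_cmod[of "v z"] by linarith
    hence "s * Re (v z) \<le> s * B" using sp by (simp add: mult_left_mono)
    hence rp: "Re (1 - of_real s * v z) > 0" using sB1 re by linarith
    have nz: "1 - of_real s * v z \<noteq> 0"
    proof
      assume "1 - of_real s * v z = 0"
      hence "Re (1 - of_real s * v z) = 0" by simp
      thus False using rp by linarith
    qed
    have vv: "(Re (v z))^2 + (Im (v z))^2 \<le> B^2"
      using b2 by (metis cmod_power2 norm_ge_zero power_mono)
    have "(cmod (1 - of_real s * v z))^2 = (1 - s * Re (v z))^2 + (s * Im (v z))^2"
      unfolding cmod_power2 re im by (simp add: power2_eq_square)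
    also have "\<dots> = 1 - 2 * s * Re (v z) + s^2 * ((Re (v z))^2 + (Im (v z))^2)"
      by (simp add: power2_eq_square algebra_simps)
    also have "\<dots> \<le> 1 - 2 * s * \<delta> + s^2 * B^2"
    proof -
      have "s^2 * ((Re (v z))^2 + (Im (v z))^2) \<le> s^2 * B^2" using vv by (simp add: mult_left_mono)
      moreover have "2 * s * \<delta> \<le> 2 * s * Re (v z)" using b1 sp by simp
      ultimately show ?thesis by linarith
    qed
    also have "\<dots> = 1 - 2 * s * \<delta> + s * (\<delta>/2)" using sB by (simp add: power2_eq_square algebra_simps)
    also have "\<dots> \<le> 1" using sp d by (simp add: algebra_simps)
    finally have "(cmod (1 - of_real s * v z))^2 \<le> 1" .
    hence c1: "cmod (1 - of_real s * v z) \<le> 1" by (simp add: power_le_one_iff abs_le_square_iff)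
    show "0 < cmod (F z)" using fz[OF z] nz by (simp add: F_def norm_mult)
    have "cmod (F z) = cmod (f z) * cmod (1 - of_real s * v z)" by (simp add: F_def norm_mult)
    also have "\<dots> \<le> 1 * 1" using fz[OF z] c1 by (intro mult_mono) auto
    finally show "cmod (F z) \<le> 1" by simp
  qed
  define A where "A = fps_expansion f 0"
  have eA: "f has_fps_expansion A" unfolding A_def using hf by (intro has_fps_expansion_fps_expansion) auto
  have eF: "F has_fps_expansion A * (1 - fps_const (of_real s) * V)"
    unfolding F_def using eA ev by (intro fps_expansion_intros)
  have "A * (1 - fps_const (of_real s) * V) = A - fps_const (of_real s) * (A * V)"
    by (simp add: algebra_simps)
  hence "coef F n = A $ n - of_real s * (A * V) $ n" using coef_eq[OF eF] by simp
  hence "M n F = Re (A $ n) - s * Re ((A * V) $ n)" by (simp add: M_def)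
  moreover have "M n f = Re (A $ n)" using coef_eq[OF eA] by (simp add: M_def)
  ultimately have "s * Re ((A * V) $ n) \<ge> 0" using mx[OF FB] by simp
  thus ?thesis using sp unfolding A_def by (simp add: zero_le_mult_iff)
qed



lemma half_lem: "(u::complex) + 2 * (v + w) = 0 \<Longrightarrow> v = - (u / 2 + w)"
  by (simp add: field_simps) (metis add.commute add_eq_0_iff2 add.assoc mult_2 )

lemma upper:
  fixes a :: "nat \<Rightarrow> complex" and z :: complex
  assumes n: "n = Suc m" and i0: "Im (a 0) = 0" and r0: "Re (a 0) > 0" and iN: "Im (a n) = 0"
    and eq: "a n + 2 * (\<Sum>j=1..n. a (n - j) * z ^ j) = 0"
  shows "cmod z \<le> (1 / Re (a 0)) * sqrt ((\<Sum>j<n. (cmod (a j))\<^sup>2) + (Re (a n))\<^sup>2 / 4)"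
proof -
  define a0 where "a0 = Re (a 0)"
  have A0: "a 0 = of_real a0" using i0 by (simp add: a0_def complex_eq_iff)
  have ap: "a0 > 0" using r0 by (simp add: a0_def)
  define S where "S = (\<Sum>j<n. (cmod (a j))\<^sup>2) + (Re (a n))\<^sup>2 / 4"
  define c where "c = (\<lambda>j. if j = 0 then cmod (a n) / 2 else cmod (a (n - j)))"
  define T where "T = (\<Sum>j=0..m. (c j)^2)"
  define x where "x = cmod z"
  have x0: "x \<ge> 0" by (simp add: x_def)
  have cn: "(cmod (a n))^2 = (Re (a n))^2" using iN by (simp add: cmod_power2)
  have T1: "T = (cmod (a n))^2 / 4 + (\<Sum>j=1..m. (cmod (a (n - j)))^2)"
    unfolding T_def by (subst sum.atLeast_Suc_atMost) (auto simp: c_def power_divide intro!: sum.cong)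
  have rev: "(\<Sum>j=1..m. (cmod (a j))^2) = (\<Sum>j=1..m. (cmod (a (n - j)))^2)"
    by (subst sum.atLeastAtMost_rev) (auto simp: n intro!: sum.cong)
  have "(\<Sum>j<n. (cmod (a j))\<^sup>2) = (\<Sum>j=0..m. (cmod (a j))\<^sup>2)"
    by (simp add: n lessThan_Suc_atMost atLeast0AtMost)
  also have "\<dots> = (cmod (a 0))^2 + (\<Sum>j=1..m. (cmod (a j))^2)"
    by (subst sum.atLeast_Suc_atMost) auto
  finally have "S = a0^2 + T" unfolding S_def T1 rev cn[symmetric] using A0 ap by simp
  hence ST: "S = a0^2 + T" .
  have T0: "T \<ge> 0" unfolding T_def by (intro sum_nonneg) auto
  have main: "x^2 \<le> S / a0^2"
  proof (cases "x \<le> 1")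
    case True
    hence "x^2 \<le> 1" using x0 by (simp add: power_le_one)
    also have "1 \<le> S / a0^2" using ST T0 ap by simp
    finally show ?thesis .
  next
    case False
    hence x1: "x > 1" by simp
    have "(\<Sum>j=1..n. a (n - j) * z ^ j) = (\<Sum>j=1..m. a (n - j) * z ^ j) + a 0 * z ^ n"
      by (simp add: n)
    with eq A0 have "a n + 2 * (of_real a0 * z ^ n + (\<Sum>j=1..m. a (n - j) * z ^ j)) = 0"
      by (simp add: add.commute)
    hence "of_real a0 * z ^ n = - (a n / 2 + (\<Sum>j=1..m. a (n - j) * z ^ j))"
      by (rule half_lem)
    hence "a0 * x ^ n = cmod (a n / 2 + (\<Sum>j=1..m. a (n - j) * z ^ j))"
      using ap by (metis norm_minus_cancel norm_mult norm_of_real norm_power abs_of_pos x_def)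
    also have "\<dots> \<le> cmod (a n / 2) + cmod (\<Sum>j=1..m. a (n - j) * z ^ j)" by (rule norm_triangle_ineq)
    also have "cmod (\<Sum>j=1..m. a (n - j) * z ^ j) \<le> (\<Sum>j=1..m. cmod (a (n - j)) * x ^ j)"
      by (rule order_trans[OF norm_sum]) (simp add: norm_mult norm_power x_def)
    finally have "a0 * x ^ n \<le> cmod (a n) / 2 + (\<Sum>j=1..m. cmod (a (n - j)) * x ^ j)" by simp
    also have "\<dots> = (\<Sum>j=0..m. c j * x ^ j)"
      by (subst sum.atLeast_Suc_atMost) (auto simp: c_def intro!: sum.cong)
    finally have L: "a0 * x ^ n \<le> (\<Sum>j=0..m. c j * x ^ j)" .
    define G where "G = (\<Sum>j<n. (x^2)^j)"
    have CS: "(\<Sum>j=0..m. c j * x ^ j)^2 \<le> T * G"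
    proof -
      have "(\<Sum>j=0..m. c j * x ^ j)^2 \<le> (\<Sum>j=0..m. (c j)^2) * (\<Sum>j=0..m. (x ^ j)^2)"
        by (rule Cauchy_Schwarz_ineq_sum)
      also have "(\<Sum>j=0..m. (x ^ j)^2) = G"
        by (simp add: G_def n lessThan_Suc_atMost atLeast0AtMost power_mult[symmetric] mult.commute)
      finally show ?thesis by (simp add: T_def)
    qed
    have "0 \<le> a0 * x ^ n" using ap x0 by simp
    hence "(a0 * x ^ n)^2 \<le> (\<Sum>j=0..m. c j * x ^ j)^2" using L by (intro power_mono) auto
    with CS have K: "a0^2 * (x^2)^n \<le> T * G" by (simp add: power_mult_distrib power_mult[symmetric] mult.commute)
    have GG: "(x^2 - 1) * G = (x^2)^n - 1" unfolding G_def by (simp add: power_diff_1_eq)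
    have xx: "x^2 - 1 > 0" using x1 by (simp add: one_less_power)
    have "a0^2 * (x^2)^n * (x^2 - 1) \<le> T * G * (x^2 - 1)" using K xx by (simp add: mult_right_mono)
    also have "\<dots> = T * ((x^2)^n - 1)" by (simp only: GG[symmetric] mult.commute mult.left_commute)
    also have "\<dots> \<le> T * (x^2)^n" using T0 by (simp add: algebra_simps)
    finally have "(x^2)^n * (a0^2 * (x^2 - 1)) \<le> (x^2)^n * T" by (simp add: algebra_simps)
    moreover have "(x^2)^n > 0" using x1 by simp
    ultimately have "a0^2 * (x^2 - 1) \<le> T" by simp
    hence "a0^2 * x^2 \<le> S" using ST by (simp add: algebra_simps)
    thus ?thesis using ap by (simp add: field_simps)
  qed
  have "x = sqrt (x^2)" using x0 by simp
  also have "\<dots> \<le> sqrt (S / a0^2)" using main by (rule real_sqrt_le_mono)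
  also have "\<dots> = sqrt S / a0" using ap by (simp add: real_sqrt_divide)
  finally show ?thesis unfolding x_def S_def a0_def by simp
qed



lemma im_an:
  assumes ext: "extremal n f"
  shows "Im (coef f n) = 0"
proof (rule ccontr)
  assume ne: "Im (coef f n) \<noteq> 0"
  have hf: "f holomorphic_on ball 0 1" using ext by (auto simp: extremal_def B0_def)
  define A where "A = fps_expansion f 0"
  have eA: "f has_fps_expansion A" unfolding A_def using hf by (intro has_fps_expansion_fps_expansion) auto
  define t where "t = - (\<bar>Re (coef f n)\<bar> + 1) / Im (coef f n)"
  define cc where "cc = 1 - \<i> * of_real t"
  have "0 \<le> Re ((fps_expansion f 0 * fps_const cc) $ n)"
    by (rule var[OF ext, of "\<lambda>_. cc" _ 1 "1 + \<bar>t\<bar>"])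
       (auto simp: cc_def norm_mult intro!: order_trans[OF norm_triangle_ineq4])
  also have "(fps_expansion f 0 * fps_const cc) $ n = coef f n * cc"
    using coef_eq[OF eA] by (simp add: A_def)
  also have "Re (coef f n * cc) = Re (coef f n) + t * Im (coef f n)" by (simp add: cc_def)
  also have "t * Im (coef f n) = - (\<bar>Re (coef f n)\<bar> + 1)" using ne by (simp add: t_def)
  finally show False by linarith
qed

lemma geom_exp:
  assumes "cmod \<zeta> < 1"
  shows "(\<lambda>z. 1 / (1 - \<zeta> * z)) has_fps_expansion Abs_fps (\<lambda>m. \<zeta> ^ m)"
proof (rule has_fps_expansionI)
  have "eventually (\<lambda>u. u \<in> ball 0 1) (nhds (0::complex))"
    by (intro eventually_nhds_in_open) auto
  thus "eventually (\<lambda>u. (\<lambda>m. Abs_fps (\<lambda>m. \<zeta> ^ m) $ m * u ^ m) sums (1 / (1 - \<zeta> * u))) (nhds 0)"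
  proof eventually_elim
    case (elim u)
    have "cmod \<zeta> * cmod u < 1 * 1" using elim assms
      by (intro mult_strict_mono) auto
    hence "cmod (\<zeta> * u) < 1" by (simp add: norm_mult)
    from geometric_sums[OF this] show ?case by (simp add: power_mult_distrib)
  qed
qed

lemma re_bound:
  fixes w :: complex assumes "cmod w < 1"
  shows "Re (2 / (1 - w)) - 1 \<ge> (1 - (cmod w)^2) / 4"
proof -
  define x where "x = Re w"
  define y where "y = Im w"
  have w2: "(cmod w)^2 = x^2 + y^2" by (simp add: x_def y_def cmod_power2)
  have lt: "x^2 + y^2 < 1" using assms w2
    by (metis norm_ge_zero power_strict_mono one_power2 zero_less_numeral)
  have "x^2 < 1" using lt by (smt (verit) zero_le_power2)
  hence "\<bar>x\<bar> < 1" by (simp add: abs_square_less_1)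
  hence x1: "x < 1" and xm: "x > -1" by auto
  define D where "D = (1 - x)^2 + y^2"
  have Dp: "D > 0" using x1 by (simp add: D_def add_pos_nonneg)
  have D4: "D \<le> 4" using lt xm by (simp add: D_def power2_eq_square algebra_simps)
  have re: "Re (2 / (1 - w)) = 2 * (1 - x) / D"
    by (simp add: Re_divide D_def x_def y_def cmod_power2 power2_eq_square)
  have "2 * (1 - x) / D - 1 = (1 - x^2 - y^2) / D" using Dp
    by (simp add: field_simps D_def power2_eq_square)
  also have "\<dots> \<ge> (1 - x^2 - y^2) / 4" using lt Dp D4 by (intro divide_left_mono) auto
  finally show ?thesis using re w2 by simp
qed



lemma lower:
  assumes ext: "extremal n f" and i0: "Im (coef f 0) = 0" and r0: "Re (coef f 0) > 0"
    and zz: "cmod \<zeta> < 1"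
  shows "Re (2 * (\<Sum>i=0..n. coef f i * \<zeta> ^ (n - i)) - coef f n) > 0"
proof -
  define \<rho> where "\<rho> = cmod \<zeta>"
  have \<rho>0: "\<rho> \<ge> 0" and \<rho>1: "\<rho> < 1" using zz by (auto simp: \<rho>_def)
  define \<epsilon> where "\<epsilon> = (1 - \<rho>^2) / 8"
  have ep: "\<epsilon> > 0" using \<rho>0 \<rho>1 by (simp add: \<epsilon>_def abs_square_less_1)
  define v where "v = (\<lambda>z. 2 * (1 / (1 - \<zeta> * z)) - 1 - of_real \<epsilon> * z ^ n)"
  define V where "V = fps_const 2 * Abs_fps (\<lambda>m. \<zeta> ^ m) - 1 - fps_const (of_real \<epsilon>) * fps_X ^ n"
  have ev: "v has_fps_expansion V" unfolding v_def V_def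
    by (intro fps_expansion_intros geom_exp zz)
  have wb: "cmod (\<zeta> * z) \<le> \<rho> \<and> cmod (\<zeta> * z) < 1" if "z \<in> ball 0 1" for z
  proof -
    have "cmod \<zeta> * cmod z \<le> cmod \<zeta> * 1" using that by (intro mult_left_mono) auto
    thus ?thesis using \<rho>1 by (simp add: norm_mult \<rho>_def)
  qed
  have nz: "1 - \<zeta> * z \<noteq> 0" if "z \<in> ball 0 1" for z
  proof
    assume "1 - \<zeta> * z = 0"
    hence "\<zeta> * z = 1" by simp
    thus False using wb[OF that] by simp
  qed
  have hv: "v holomorphic_on ball 0 1" unfolding v_def using nz by (intro holomorphic_intros) auto
  define B where "B = 2 / (1 - \<rho>) + 1 + \<epsilon>"
  have bd: "\<epsilon> \<le> Re (v z) \<and> cmod (v z) \<le> B" if z: "z \<in> ball 0 1" for z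
  proof -
    define w where "w = \<zeta> * z"
    have w1: "cmod w < 1" and wr: "cmod w \<le> \<rho>" using wb[OF z] by (auto simp: w_def)
    have zn: "cmod (z ^ n) \<le> 1" using z by (simp add: norm_power power_le_one)
    have vz: "v z = 2 / (1 - w) - 1 - of_real \<epsilon> * z ^ n" by (simp add: v_def w_def)
    have "Re (of_real \<epsilon> * z ^ n) \<le> \<epsilon>"
    proof -
      have "Re (of_real \<epsilon> * z ^ n) \<le> cmod (of_real \<epsilon> * z ^ n)" by (rule complex_Re_le_cmod)
      also have "\<dots> = \<epsilon> * cmod (z ^ n)" using ep by (simp add: norm_mult)
      also have "\<dots> \<le> \<epsilon>" using zn ep by (simp add: mult_le_cancel_left1)
      finally show ?thesis .
    qed
    moreover have "Re (2 / (1 - w)) - 1 \<ge> (1 - \<rho>^2) / 4"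
    proof -
      have "(cmod w)^2 \<le> \<rho>^2" using wr by (simp add: power_mono)
      hence "(1 - \<rho>^2) / 4 \<le> (1 - (cmod w)^2) / 4" by simp
      thus ?thesis using re_bound[OF w1] by linarith
    qed
    ultimately have r: "\<epsilon> \<le> Re (v z)" unfolding vz by (simp add: \<epsilon>_def)
    have "1 - \<rho> \<le> cmod (1 - w)" using norm_triangle_ineq2[of 1 w] wr by simp
    hence "cmod (2 / (1 - w)) \<le> 2 / (1 - \<rho>)" using \<rho>1
      by (simp add: norm_divide frac_le)
    moreover have "cmod (of_real \<epsilon> * z ^ n) \<le> \<epsilon>" using zn ep by (simp add: norm_mult mult_le_cancel_left1)
    ultimately have "cmod (v z) \<le> B" unfolding vz B_def
      by (smt (verit) norm_triangle_ineq4 norm_one)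
    with r show ?thesis by simp
  qed
  have "0 \<le> Re ((fps_expansion f 0 * V) $ n)" by (rule var[OF ext hv ev ep bd])
  define A where "A = fps_expansion f 0"
  have hf: "f holomorphic_on ball 0 1" using ext by (auto simp: extremal_def B0_def)
  have eA: "f has_fps_expansion A" unfolding A_def using hf by (intro has_fps_expansion_fps_expansion) auto
  have Vn: "V $ k = 2 * \<zeta> ^ k - (if k = 0 then 1 else 0) - of_real \<epsilon> * (if k = n then 1 else 0)" for k
    by (simp add: V_def)
  have "(A * V) $ n = (\<Sum>i=0..n. coef f i * (2 * \<zeta> ^ (n - i) - (if i = n then 1 else 0)
        - of_real \<epsilon> * (if i = 0 then 1 else 0)))"
    unfolding fps_mult_nth Vn coef_eq[OF eA]
    by (intro sum.cong refl) auto
  also have "\<dots> = (\<Sum>i=0..n. 2 * (coef f i * \<zeta> ^ (n - i)) - (if i = n then coef f i else 0)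
        - of_real \<epsilon> * (if i = 0 then coef f i else 0))"
    by (intro sum.cong refl) (simp add: algebra_simps)
  also have "\<dots> = 2 * (\<Sum>i=0..n. coef f i * \<zeta> ^ (n - i)) - (\<Sum>i=0..n. if i = n then coef f i else 0)
        - of_real \<epsilon> * (\<Sum>i=0..n. if i = 0 then coef f i else 0)"
    by (simp only: sum_subtractf sum_distrib_left)
  also have "\<dots> = 2 * (\<Sum>i=0..n. coef f i * \<zeta> ^ (n - i)) - coef f n - of_real \<epsilon> * coef f 0"
    by (simp add: sum.delta')
  finally have "0 \<le> Re (2 * (\<Sum>i=0..n. coef f i * \<zeta> ^ (n - i)) - coef f n) - \<epsilon> * Re (coef f 0)"
    using \<open>0 \<le> Re ((fps_expansion f 0 * V) $ n)\<close> by (simp add: A_def)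
  moreover have "\<epsilon> * Re (coef f 0) > 0" using ep r0 by simp
  ultimately show ?thesis by linarith
qed



theorem lemma10:
  fixes n :: nat and f :: "complex \<Rightarrow> complex" and z :: complex
  assumes "extremal n f"
    and "Im (coef f 0) = 0" and "Re (coef f 0) > 0"
    and "coef f n + 2 * (\<Sum>j=1..n. coef f (n - j) * z ^ j) = 0"
  shows "1 \<le> cmod z \<and>
         cmod z \<le> (1 / Re (coef f 0)) *
            sqrt ((\<Sum>j<n. (cmod (coef f j))\<^sup>2) + (Re (coef f n))\<^sup>2 / 4)"
proof -
  have "n \<noteq> 0"
  proof
    assume "n = 0"
    with assms(4) have "coef f 0 = 0" by simp
    with assms(3) show False by simp
  qed
  then obtain m where n: "n = Suc m" using not0_implies_Suc by blast
  have id: "2 * (\<Sum>i=0..n. coef f i * z ^ (n - i)) - coef f n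
            = coef f n + 2 * (\<Sum>j=1..n. coef f (n - j) * z ^ j)"
  proof -
    have "(\<Sum>i=0..n. coef f i * z ^ (n - i)) = (\<Sum>j=0..n. coef f (n - j) * z ^ j)"
      by (subst sum.atLeastAtMost_rev) (auto intro!: sum.cong)
    also have "\<dots> = coef f n + (\<Sum>j=1..n. coef f (n - j) * z ^ j)"
      by (subst sum.atLeast_Suc_atMost) auto
    finally show ?thesis by (simp add: algebra_simps)
  qed
  have lb: "1 \<le> cmod z"
  proof (rule ccontr)
    assume "\<not> 1 \<le> cmod z"
    hence "cmod z < 1" by simp
    from lower[OF assms(1-3) this] show False unfolding id assms(4) by simp
  qed
  have ub: "cmod z \<le> (1 / Re (coef f 0)) *
            sqrt ((\<Sum>j<n. (cmod (coef f j))\<^sup>2) + (Re (coef f n))\<^sup>2 / 4)"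
    by (rule upper[OF n assms(2,3) im_an[OF assms(1)] assms(4)])
  from lb ub show ?thesis by simp
qed


end
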